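(* Let $\Delta$ be a $K$-dissection diagram on a compact surface $S$, and let $\alpha,\beta$ be two intersecting closed curves on $S$ (transverse to $\Delta$). Let $\gamma$ be the commutator $[\alpha,\beta]$ based at an intersection point of $\alpha$ and $\beta$. Then $\mathrm{effcont}(\gamma)\subseteq[\mathrm{cont}(\alpha),\mathrm{cont}(\beta)]$.
   Context: A $K$-dissection diagram on $(S,\partial S)$: finite collection of essential simple closed curves and properly embedded essential arcs, in minimal position, transversely oriented and labeled by vertices of $K$, curves with equal labels disjoint, intersecting only if labels adjacent. For a loop $\gamma$ and a point $*$ on it, $\phi_*(\gamma)\in A(K)$ is the product of labels of curves/arcs crossed along $\gamma$ from $*$ (exponents $\pm1$ by transverse orientation). $\mathrm{cont}(\gamma)$ is the set of labels crossed by $\gamma$; $\mathrm{rcont}_*(\gamma)$ is the smallest vertex set $V$ with $\phi_*(\gamma)\in A(V)$. Vertex sets $P,Q$ are adjacent if for all $p\in P,q\in Q$, $p=q$ or $p,q$ adjacent. $\mathrm{effcont}(\gamma)$ is the smallest subset $Z\subseteq\mathrm{cont}(\gamma)$ such that $Z\supseteq\mathrm{rcont}_*(\gamma)$ for every point $*\in\gamma$ and $\mathrm{cont}(\gamma)\setminus Z$ is adjacent to $Z$. For vertex sets $U,V$: write $U$ as the join of its anti-components $U_i$ (vertex sets of components of the complement of the induced subgraph on $U$) and likewise $V$; $U''$ is the union of those $U_i$ not adjacent to $V$, $V''$ the union of those $V_j$ not adjacent to $U$, and $[U,V]=U''\cup V''$. *)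

theory Defs
  imports Main
begin

text \<open>The graph K: vertices of type 'v (finite), adjacency relation E (symmetric, irreflexive).
  A letter of a word is a pair (vertex, sign), sign True = exponent +1, False = exponent -1.\<close>

type_synonym 'v letter = "'v \<times> bool"

definition inv_word :: "'v letter list \<Rightarrow> 'v letter list" where
  "inv_word w = rev (map (\<lambda>(x, s). (x, \<not> s)) w)"

text \<open>Equality in the right-angled Artin group A(K): the congruence on words generated by
  free cancellation and by commutation of adjacent generators.\<close>

inductive raag_eq :: "('v \<Rightarrow> 'v \<Rightarrow> bool) \<Rightarrow> 'v letter list \<Rightarrow> 'v letter list \<Rightarrow> bool"
  for E where
  refl: "raag_eq E w w"
| sym: "raag_eq E u w \<Longrightarrow> raag_eq E w u"
| trans: "raag_eq E u v \<Longrightarrow> raag_eq E v w \<Longrightarrow> raag_eq E u w"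
| cancel: "raag_eq E (p @ [(x, s), (x, \<not> s)] @ q) (p @ q)"
| commute: "E x y \<Longrightarrow> raag_eq E (p @ [(x, s), (y, t)] @ q) (p @ [(y, t), (x, s)] @ q)"

definition in_special :: "('v \<Rightarrow> 'v \<Rightarrow> bool) \<Rightarrow> 'v set \<Rightarrow> 'v letter list \<Rightarrow> bool" where
  "in_special E V w \<longleftrightarrow> (\<exists>w'. raag_eq E w w' \<and> fst ` set w' \<subseteq> V)"

definition rcont :: "('v \<Rightarrow> 'v \<Rightarrow> bool) \<Rightarrow> 'v letter list \<Rightarrow> 'v set" where
  "rcont E w = (THE V. in_special E V w \<and> (\<forall>V'. in_special E V' w \<longrightarrow> V \<subseteq> V'))"

definition cont :: "'v letter list \<Rightarrow> 'v set" where
  "cont w = fst ` set w"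

definition adj_sets :: "('v \<Rightarrow> 'v \<Rightarrow> bool) \<Rightarrow> 'v set \<Rightarrow> 'v set \<Rightarrow> bool" where
  "adj_sets E P Q \<longleftrightarrow> (\<forall>p\<in>P. \<forall>q\<in>Q. p = q \<or> E p q)"

text \<open>A transverse loop is recorded by its cyclic sequence of signed crossings w (read from
  some base point). Moving the base point * along the loop (off the diagram) yields exactly
  the cyclic rotations of w, so phi_*(gamma) ranges over the words rotate k w.\<close>

definition effcont_ok :: "('v \<Rightarrow> 'v \<Rightarrow> bool) \<Rightarrow> 'v letter list \<Rightarrow> 'v set \<Rightarrow> bool" where
  "effcont_ok E w Z \<longleftrightarrow> Z \<subseteq> cont w \<and> (\<forall>k. rcont E (rotate k w) \<subseteq> Z)
      \<and> adj_sets E (cont w - Z) Z"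

definition effcont :: "('v \<Rightarrow> 'v \<Rightarrow> bool) \<Rightarrow> 'v letter list \<Rightarrow> 'v set" where
  "effcont E w = (THE Z. effcont_ok E w Z \<and> (\<forall>Z'. effcont_ok E w Z' \<longrightarrow> Z \<subseteq> Z'))"

definition nonadj_in :: "('v \<Rightarrow> 'v \<Rightarrow> bool) \<Rightarrow> 'v set \<Rightarrow> 'v \<Rightarrow> 'v \<Rightarrow> bool" where
  "nonadj_in E U x y \<longleftrightarrow> x \<in> U \<and> y \<in> U \<and> x \<noteq> y \<and> \<not> E x y"

definition anticomps :: "('v \<Rightarrow> 'v \<Rightarrow> bool) \<Rightarrow> 'v set \<Rightarrow> 'v set set" where
  "anticomps E U = {{y \<in> U. (nonadj_in E U)\<^sup>*\<^sup>* x y} | x. x \<in> U}"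

definition bracket :: "('v \<Rightarrow> 'v \<Rightarrow> bool) \<Rightarrow> 'v set \<Rightarrow> 'v set \<Rightarrow> 'v set" where
  "bracket E U V =
     \<Union>{C \<in> anticomps E U. \<not> adj_sets E C V} \<union> \<Union>{D \<in> anticomps E V. \<not> adj_sets E D U}"

end

theory Submission
  imports Defs
begin

lemma req_app: "raag_eq E u v \<Longrightarrow> raag_eq E (p @ u @ q) (p @ v @ q)"
proof (induction rule: raag_eq.induct)
  case (refl w) then show ?case by (rule raag_eq.refl)
next
  case (sym u w) then show ?case by (blast intro: raag_eq.sym)
next
  case (trans u v w) then show ?case by (blast intro: raag_eq.trans)
next
  case (cancel p' x s q')
  then show ?case using raag_eq.cancel[of E "p@p'" x s "q'@q"] by simp
next
  case (commute x y p' s t q')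
  then show ?case using raag_eq.commute[of E x y "p@p'" s t "q'@q"] by simp
qed

lemma req_left: "raag_eq E u v \<Longrightarrow> raag_eq E (p @ u) (p @ v)"
  using req_app[of E u v p "[]"] by simp

lemma req_right: "raag_eq E u v \<Longrightarrow> raag_eq E (u @ q) (v @ q)"
  using req_app[of E u v "[]" q] by simp

lemma req_swap:
  assumes "x = y \<or> E x y"
  shows "raag_eq E (p @ [(x,s),(y,t)] @ q) (p @ [(y,t),(x,s)] @ q)"
proof (cases "E x y")
  case True then show ?thesis by (rule raag_eq.commute)
next
  case False
  then have xy: "x = y" using assms by simp
  show ?thesis
  proof (cases "t = s")
    case True then show ?thesis using xy by (simp add: raag_eq.refl)
  next
    case False
    then have t: "t = (\<not> s)" by auto
    have 1: "raag_eq E (p @ [(x,s),(y,t)] @ q) (p @ q)"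
      using raag_eq.cancel[of E p x s q] xy t by simp
    have 2: "raag_eq E (p @ [(y,t),(x,s)] @ q) (p @ q)"
      using raag_eq.cancel[of E p x "\<not> s" q] xy t by simp
    show ?thesis using 1 2 by (meson raag_eq.sym raag_eq.trans)
  qed
qed

lemma req_letter_move:
  "\<forall>l'\<in>set y. fst l = fst l' \<or> E (fst l) (fst l') \<Longrightarrow> raag_eq E (l # y) (y @ [l])"
proof (induction y)
  case Nil then show ?case by (simp add: raag_eq.refl)
next
  case (Cons l' y)
  obtain x s where l: "l = (x,s)" by force
  obtain x' s' where l': "l' = (x',s')" by force
  have 1: "raag_eq E (l # l' # y) (l' # l # y)"
    using req_swap[of x x' E "[]" s s' y] Cons.prems l l' by simp
  have 2: "raag_eq E (l' # l # y) (l' # (y @ [l]))"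
    using req_left[OF Cons.IH, of "[l']"] Cons.prems by simp
  show ?case using 1 2 by (simp add: raag_eq.trans)
qed

lemma req_words:
  "\<forall>l\<in>set x. \<forall>l'\<in>set y. fst l = fst l' \<or> E (fst l) (fst l') \<Longrightarrow> raag_eq E (x @ y) (y @ x)"
proof (induction x)
  case Nil then show ?case by (simp add: raag_eq.refl)
next
  case (Cons l x)
  have 1: "raag_eq E (l # x @ y) (l # y @ x)"
    using req_left[OF Cons.IH, of "[l]"] Cons.prems by simp
  have 2: "raag_eq E ((l # y) @ x) ((y @ [l]) @ x)"
    by (rule req_right, rule req_letter_move) (use Cons.prems in simp)
  show ?case using 1 2 by (simp add: raag_eq.trans)
qed

lemma inv_word_Nil[simp]: "inv_word [] = []"
  by (simp add: inv_word_def)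

lemma inv_word_Cons[simp]: "inv_word (l # x) = inv_word x @ [(fst l, \<not> snd l)]"
  by (cases l) (simp add: inv_word_def)

lemma inv_word_append[simp]: "inv_word (x @ y) = inv_word y @ inv_word x"
  by (simp add: inv_word_def)

lemma fst_set_inv[simp]: "fst ` set (inv_word x) = fst ` set x"
  by (induction x) auto

lemma filter_inv: "filter (\<lambda>l. Q (fst l)) (inv_word x) = inv_word (filter (\<lambda>l. Q (fst l)) x)"
  by (induction x) auto

lemma req_inv: "raag_eq E (x @ inv_word x) []"
proof (induction x)
  case Nil then show ?case by (simp add: raag_eq.refl)
next
  case (Cons l x)
  have 1: "raag_eq E ([l] @ (x @ inv_word x) @ [(fst l, \<not> snd l)]) ([l] @ [] @ [(fst l, \<not> snd l)])"
    by (rule req_app[OF Cons.IH])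
  have 2: "raag_eq E ([] @ [(fst l, snd l), (fst l, \<not> snd l)] @ []) ([] @ [])"
    by (rule raag_eq.cancel)
  show ?case using 1 2 by (cases l) (auto intro: raag_eq.trans)
qed

lemma req_rot:
  assumes "raag_eq E (p @ q) []"
  shows "raag_eq E (q @ p) []"
proof -
  have 1: "raag_eq E ((q @ p) @ (q @ inv_word q) @ []) ((q @ p) @ [] @ [])"
    by (rule req_app[OF req_inv])
  have 2: "raag_eq E (q @ (p @ q) @ inv_word q) (q @ [] @ inv_word q)"
    by (rule req_app[OF assms])
  have 3: "raag_eq E (q @ inv_word q) []" by (rule req_inv)
  show ?thesis using 1 2 3 by (simp del: append_assoc)
    (metis append.assoc raag_eq.sym raag_eq.trans)
qed

lemma req_sep:
  "\<forall>l1\<in>set u. \<forall>l2\<in>set u. \<not> P l1 \<longrightarrow> P l2 \<longrightarrow> fst l1 = fst l2 \<or> E (fst l1) (fst l2)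
   \<Longrightarrow> raag_eq E u (filter P u @ filter (\<lambda>l. \<not> P l) u)"
proof (induction u)
  case Nil then show ?case by (simp add: raag_eq.refl)
next
  case (Cons l u)
  have IH: "raag_eq E u (filter P u @ filter (\<lambda>l. \<not> P l) u)"
    using Cons.IH Cons.prems by simp
  have 1: "raag_eq E (l # u) (l # filter P u @ filter (\<lambda>l. \<not> P l) u)"
    using req_left[OF IH, of "[l]"] by simp
  show ?case
  proof (cases "P l")
    case True then show ?thesis using 1 by simp
  next
    case False
    have 2: "raag_eq E ((l # filter P u) @ filter (\<lambda>l. \<not> P l) u)
                       ((filter P u @ [l]) @ filter (\<lambda>l. \<not> P l) u)"
      by (rule req_right, rule req_letter_move) (use Cons.prems False in auto)
    show ?thesis using 1 2 False by (auto intro: raag_eq.trans)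
  qed
qed

lemma req_filter:
  "raag_eq E u v \<Longrightarrow> raag_eq E (filter (\<lambda>l. fst l \<in> V) u) (filter (\<lambda>l. fst l \<in> V) v)"
proof (induction rule: raag_eq.induct)
  case (refl w) then show ?case by (rule raag_eq.refl)
next
  case (sym u w) then show ?case by (blast intro: raag_eq.sym)
next
  case (trans u v w) then show ?case by (blast intro: raag_eq.trans)
next
  case (cancel p x s q)
  let ?f = "filter (\<lambda>l. fst l \<in> V)"
  show ?case
  proof (cases "x \<in> V")
    case True
    then show ?thesis using raag_eq.cancel[of E "?f p" x s "?f q"] by simp
  next
    case False
    then show ?thesis by (simp add: raag_eq.refl)
  qed
next
  case (commute x y p s t q)
  let ?f = "filter (\<lambda>l. fst l \<in> V)"
  show ?case
  proof (cases "x \<in> V \<and> y \<in> V")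
    case True
    then show ?thesis using raag_eq.commute[of E x y "?f p" s t "?f q"] commute by simp
  next
    case False
    then show ?thesis by (cases "x \<in> V"; cases "y \<in> V") (simp_all add: raag_eq.refl)
  qed
qed

lemma in_special_Int:
  assumes "in_special E V w" "in_special E W w"
  shows "in_special E (V \<inter> W) w"
proof -
  obtain w1 where w1: "raag_eq E w w1" "fst ` set w1 \<subseteq> V"
    using assms(1) unfolding in_special_def by (elim exE conjE)
  obtain w2 where w2: "raag_eq E w w2" "fst ` set w2 \<subseteq> W"
    using assms(2) unfolding in_special_def by (elim exE conjE)
  have "raag_eq E w1 w" using w1(1) by (rule raag_eq.sym)
  then have "raag_eq E w1 w2" using w2(1) by (rule raag_eq.trans)
  then have f1: "raag_eq E (filter (\<lambda>l. fst l \<in> V) w1) (filter (\<lambda>l. fst l \<in> V) w2)"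
    by (rule req_filter)
  have f2: "filter (\<lambda>l. fst l \<in> V) w1 = w1"
    by (rule filter_True) (use w1(2) in blast)
  have "raag_eq E w1 (filter (\<lambda>l. fst l \<in> V) w2)" using f1 unfolding f2 .
  then have g1: "raag_eq E w (filter (\<lambda>l. fst l \<in> V) w2)" by (rule raag_eq.trans[OF w1(1)])
  have g2: "fst ` set (filter (\<lambda>l. fst l \<in> V) w2) \<subseteq> V \<inter> W" using w2(2) by auto
  show ?thesis unfolding in_special_def by (intro exI conjI, rule g1, rule g2)
qed

lemma in_special_Inter:
  "finite F \<Longrightarrow> \<forall>V\<in>F. in_special E V w \<Longrightarrow> in_special E (\<Inter>F) w"
proof (induction F rule: finite_induct)
  case empty then show ?case unfolding in_special_def by (auto intro: raag_eq.refl)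
next
  case (insert V F) then show ?case using in_special_Int[of E V w "\<Inter>F"] by simp
qed

lemma rcont_le:
  fixes E :: "'v::finite \<Rightarrow> 'v \<Rightarrow> bool"
  assumes "in_special E V w"
  shows "rcont E w \<subseteq> V"
proof -
  let ?F = "{V. in_special E V w}"
  let ?M = "\<Inter>?F"
  have fin: "finite ?F" by (rule finite)
  have M: "in_special E ?M w" by (rule in_special_Inter[OF fin]) simp
  have "rcont E w = ?M"
    unfolding rcont_def
  proof (rule the_equality)
    show "in_special E ?M w \<and> (\<forall>V'. in_special E V' w \<longrightarrow> ?M \<subseteq> V')"
      by (rule conjI[OF M], intro allI impI, rule Inter_lower, simp)
  next
    fix V' assume h: "in_special E V' w \<and> (\<forall>V'a. in_special E V'a w \<longrightarrow> V' \<subseteq> V'a)"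
    have "V' \<subseteq> ?M" by (rule Inter_greatest) (use h in simp)
    moreover have "?M \<subseteq> V'" by (rule Inter_lower) (use h in simp)
    ultimately show "V' = ?M" by (rule subset_antisym)
  qed
  moreover have "?M \<subseteq> V" by (rule Inter_lower) (simp add: assms)
  ultimately show ?thesis by simp
qed

lemma effcont_le:
  assumes "effcont_ok E w Z"
  shows "effcont E w \<subseteq> Z"
proof -
  let ?F = "{Z. effcont_ok E w Z}"
  let ?M = "\<Inter>?F"
  have Zin: "?M \<subseteq> Z" by (rule Inter_lower) (simp add: assms)
  have M: "effcont_ok E w ?M"
    unfolding effcont_ok_def[of E w ?M]
  proof (intro conjI allI)
    show "?M \<subseteq> cont w" using Zin assms unfolding effcont_ok_def[of E w Z] by blast
  next
    fix k show "rcont E (rotate k w) \<subseteq> ?M"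
      by (rule Inter_greatest) (simp add: effcont_ok_def)
  next
    show "adj_sets E (cont w - ?M) ?M"
      unfolding adj_sets_def
    proof (intro ballI)
      fix p q assume p: "p \<in> cont w - ?M" and q: "q \<in> ?M"
      from p obtain Z' where Z': "Z' \<in> ?F" "p \<notin> Z'" by blast
      have qZ: "q \<in> Z'" using q Z'(1) by (rule InterD)
      have okZ: "effcont_ok E w Z'" using Z'(1) by simp
      then have "adj_sets E (cont w - Z') Z'" unfolding effcont_ok_def[of E w Z'] by simp
      moreover have "p \<in> cont w - Z'" using p Z'(2) by simp
      ultimately show "p = q \<or> E p q" using qZ unfolding adj_sets_def by simp
    qed
  qed
  have "effcont E w = ?M"
    unfolding effcont_def
  proof (rule the_equality)
    show "effcont_ok E w ?M \<and> (\<forall>Z'. effcont_ok E w Z' \<longrightarrow> ?M \<subseteq> Z')"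
      by (rule conjI[OF M], intro allI impI, rule Inter_lower, simp)
  next
    fix Z' assume h: "effcont_ok E w Z' \<and> (\<forall>Z'a. effcont_ok E w Z'a \<longrightarrow> Z' \<subseteq> Z'a)"
    have "Z' \<subseteq> ?M" by (rule Inter_greatest) (use h in simp)
    moreover have "?M \<subseteq> Z'" by (rule Inter_lower) (use h in simp)
    ultimately show "Z' = ?M" by (rule subset_antisym)
  qed
  then show ?thesis using Zin by simp
qed

lemma rtranclp_sym:
  assumes "\<And>x y. R x y \<Longrightarrow> R y x"
  shows "R\<^sup>*\<^sup>* x y \<Longrightarrow> R\<^sup>*\<^sup>* y x"
proof (induction rule: rtranclp.induct)
  case (rtrancl_refl a) then show ?case by simp
next
  case (rtrancl_into_rtrancl a b c)
  then show ?case using assms by (meson converse_rtranclp_into_rtranclp)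
qed

lemma bracket_sym: "bracket E U V = bracket E V U"
  unfolding bracket_def by blast

lemma anticomp_mem:
  assumes "r \<in> U"
  shows "{y \<in> U. (nonadj_in E U)\<^sup>*\<^sup>* r y} \<in> anticomps E U"
    and "r \<in> {y \<in> U. (nonadj_in E U)\<^sup>*\<^sup>* r y}"
  using assms unfolding anticomps_def by auto

lemma notbr_adj:
  assumes "r \<in> U" "r \<notin> bracket E U V" "q \<in> V"
  shows "r = q \<or> E r q"
proof -
  let ?C = "{y \<in> U. (nonadj_in E U)\<^sup>*\<^sup>* r y}"
  have "adj_sets E ?C V"
    using assms anticomp_mem[of r U E] unfolding bracket_def by blast
  then show ?thesis using assms(1,3) unfolding adj_sets_def by auto
qed

lemma adj_part:
  assumes symE: "\<And>x y. E x y \<Longrightarrow> E y x"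
    and r: "r \<in> U" "r \<notin> bracket E U V" and z: "z \<in> bracket E U V"
  shows "r = z \<or> E r z"
proof (rule ccontr)
  assume nz: "\<not> (r = z \<or> E r z)"
  let ?Cr = "{y \<in> U. (nonadj_in E U)\<^sup>*\<^sup>* r y}"
  have adjr: "adj_sets E ?Cr V"
    using r anticomp_mem[of r U E] unfolding bracket_def by blast
  have symN: "\<And>x y. nonadj_in E U x y \<Longrightarrow> nonadj_in E U y x"
    unfolding nonadj_in_def using symE by blast
  from z consider (A) C where "C \<in> anticomps E U" "\<not> adj_sets E C V" "z \<in> C"
    | (B) D where "D \<in> anticomps E V" "z \<in> D"
    unfolding bracket_def by blast
  then show False
  proof cases
    case A
    then obtain x0 where x0: "x0 \<in> U" "C = {y \<in> U. (nonadj_in E U)\<^sup>*\<^sup>* x0 y}"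
      unfolding anticomps_def by blast
    have zU: "z \<in> U" and x0z: "(nonadj_in E U)\<^sup>*\<^sup>* x0 z" using A x0 by auto
    have rz: "nonadj_in E U r z" using nz r zU unfolding nonadj_in_def by auto
    have zr: "(nonadj_in E U)\<^sup>*\<^sup>* z r" using symN[OF rz] by auto
    have x0r: "(nonadj_in E U)\<^sup>*\<^sup>* x0 r" using x0z zr by auto
    have rx0: "(nonadj_in E U)\<^sup>*\<^sup>* r x0" using rtranclp_sym[of "nonadj_in E U", OF symN x0r] by blast
    have "C = ?Cr" using x0 x0r rx0 by (auto intro: rtranclp_trans)
    then show False using A adjr by simp
  next
    case B
    then have "z \<in> V" unfolding anticomps_def by auto
    then show False using notbr_adj[OF r] nz by blast
  qed
qed

lemma cont_cases: "r \<in> cont w \<Longrightarrow> \<exists>l\<in>set w. fst l = r"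
  unfolding cont_def by auto

theorem lemma6p12:
  fixes E :: "'v::finite \<Rightarrow> 'v \<Rightarrow> bool"
    and a b :: "'v letter list"
  assumes "\<And>x y. E x y \<Longrightarrow> E y x"
    and "\<And>x. \<not> E x x"
  shows "effcont E (a @ b @ inv_word a @ inv_word b) \<subseteq> bracket E (cont a) (cont b)"
proof -
  define w where "w = a @ b @ inv_word a @ inv_word b"
  define A where "A = cont a"
  define B where "B = cont b"
  define Z where "Z = bracket E A B"
  have cw: "cont w = A \<union> B" unfolding w_def A_def B_def cont_def by (simp add: image_Un) blast
  have Zsub: "Z \<subseteq> cont w" unfolding cw Z_def bracket_def anticomps_def by blast
  have adjZ: "\<And>r z. r \<in> cont w - Z \<Longrightarrow> z \<in> Z \<Longrightarrow> r = z \<or> E r z"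
  proof -
    fix r z assume r: "r \<in> cont w - Z" and z: "z \<in> Z"
    have zA: "z \<in> bracket E A B" using z Z_def by simp
    have rA: "r \<notin> bracket E A B" using r Z_def by simp
    show "r = z \<or> E r z"
    proof (cases "r \<in> A")
      case True show ?thesis by (rule adj_part[where E=E, OF assms(1) True rA zA])
    next
      case False
      then have rB: "r \<in> B" using r cw by simp
      have zB: "z \<in> bracket E B A" using zA bracket_sym[of E A B] by simp
      have rB': "r \<notin> bracket E B A" using rA bracket_sym[of E A B] by simp
      show ?thesis by (rule adj_part[where E=E, OF assms(1) rB rB' zB])
    qed
  qed
  have rot: "in_special E Z (rotate k w)" for k
  proof -
    let ?P = "\<lambda>l. fst l \<in> Z"
    let ?u = "rotate k w"
    have sep: "raag_eq E ?u (filter ?P ?u @ filter (\<lambda>l. \<not> ?P l) ?u)"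
    proof (rule req_sep, intro ballI impI)
      fix l1 l2 assume "l1 \<in> set ?u" "l2 \<in> set ?u" "\<not> ?P l1" "?P l2"
      then show "fst l1 = fst l2 \<or> E (fst l1) (fst l2)"
        using adjZ[of "fst l1" "fst l2"] unfolding cont_def by auto
    qed
    define x where "x = filter (\<lambda>l. fst l \<notin> Z) a"
    define y where "y = filter (\<lambda>l. fst l \<notin> Z) b"
    have fw: "filter (\<lambda>l. \<not> ?P l) w = x @ y @ inv_word x @ inv_word y"
      unfolding w_def x_def y_def
      using filter_inv[of "\<lambda>v. v \<notin> Z" a] filter_inv[of "\<lambda>v. v \<notin> Z" b] by simp
    have xy: "\<forall>l\<in>set x. \<forall>l'\<in>set y. fst l = fst l' \<or> E (fst l) (fst l')"
    proof (intro ballI)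
      fix l l' assume l: "l \<in> set x" and l': "l' \<in> set y"
      have "fst l \<in> A" "fst l \<notin> Z" using l unfolding x_def A_def cont_def by auto
      moreover have "fst l' \<in> B" using l' unfolding y_def B_def cont_def by auto
      ultimately show "fst l = fst l' \<or> E (fst l) (fst l')"
        using notbr_adj[of "fst l" A E B "fst l'"] Z_def by blast
    qed
    have e1: "raag_eq E ([] @ (x @ y) @ (inv_word x @ inv_word y)) ([] @ (y @ x) @ (inv_word x @ inv_word y))"
      by (rule req_app, rule req_words[OF xy])
    have e2: "raag_eq E (y @ (x @ inv_word x) @ inv_word y) (y @ [] @ inv_word y)"
      by (rule req_app, rule req_inv)
    have e3: "raag_eq E (y @ inv_word y) []" by (rule req_inv)
    have e1': "raag_eq E (x @ y @ inv_word x @ inv_word y) (y @ x @ inv_word x @ inv_word y)"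
      using e1 by simp
    have e2': "raag_eq E (y @ x @ inv_word x @ inv_word y) (y @ inv_word y)" using e2 by simp
    have fw0: "raag_eq E (filter (\<lambda>l. \<not> ?P l) w) []"
      unfolding fw by (rule raag_eq.trans[OF e1' raag_eq.trans[OF e2' e3]])
    define m where "m = k mod length w"
    have ur: "?u = drop m w @ take m w" unfolding m_def by (rule rotate_drop_take)
    have "raag_eq E (filter (\<lambda>l. \<not> ?P l) (take m w) @ filter (\<lambda>l. \<not> ?P l) (drop m w)) []"
      using fw0 by (metis append_take_drop_id filter_append)
    then have fu0: "raag_eq E (filter (\<lambda>l. \<not> ?P l) ?u) []"
      unfolding ur filter_append by (rule req_rot)
    have "raag_eq E ?u (filter ?P ?u @ [])"
      by (rule raag_eq.trans[OF sep req_left[OF fu0]])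
    then show ?thesis unfolding in_special_def by auto
  qed
  have ok: "effcont_ok E w Z"
    unfolding effcont_ok_def
  proof (intro conjI allI)
    show "Z \<subseteq> cont w" by (rule Zsub)
  next
    fix k show "rcont E (rotate k w) \<subseteq> Z" by (rule rcont_le[OF rot])
  next
    show "adj_sets E (cont w - Z) Z" unfolding adj_sets_def using adjZ by blast
  qed
  show ?thesis using effcont_le[OF ok] unfolding w_def Z_def A_def B_def .
qed

end
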